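(* Let $F_0,\dots,F_{n+1}$ be complete oriented flags in $\mathbb{R}^n$. Then there exist $x_0,\dots,x_{n+1}\in\mathbb{R}^n$ such that $$\mathrm{Or}([F_0,\dots,\widehat{F_i},\dots,\widehat{F_j},\dots,F_{n+1}])=\mathrm{Or}(x_0,\dots,\widehat{x_i},\dots,\widehat{x_j},\dots,x_{n+1})$$ for every $0\le i<j\le n+1$.
   Context: A complete oriented flag $F$ is a chain $\{0\}=F^0\subset F^1\subset\dots\subset F^n=\mathbb{R}^n$ with $\dim F^i=i$, each $F^i$ equipped with a choice of open half-space $(F^i)^+$ of $F^i$ bounded by $F^{i-1}$ (equivalently an orientation of each $F^i$: $(v_1,\dots,v_{i-1},x)$ is positive iff $(v_1,\dots,v_{i-1})$ is positive in $F^{i-1}$ and $x\in(F^i)^+$). For an oriented $k$-dimensional subspace $W$ ($0\le k\le n-1$) and complete oriented flag $F$, let $d$ be the unique integer $1\le d\le k+1$ with $F^{d-1}\subseteq W$, $F^d\not\subseteq W$; then $[W,F]$ is $W+F^d$ oriented by $(w_1,\dots,w_k,x)$ with $(w_1,\dots,w_k)$ a positive basis of $W$ and $x\in(F^d)^+$. Inductively, $[F_1]=F_1^1$ (with its orientation) and $[F_1,\dots,F_k]=[[F_1,\dots,F_{k-1}],F_k]$, an oriented $k$-dimensional subspace. For an oriented $n$-dimensional space $U$, $\mathrm{Or}(U)\in\{\pm1\}$ is the sign of its orientation relative to the canonical one of $\mathbb{R}^n$; for vectors, $\mathrm{Or}(v_1,\dots,v_n)=\operatorname{sign}\det(v_1,\dots,v_n)$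 (zero if not a basis). *)

theory Defs
  imports "HOL-Analysis.Analysis"
begin

text \<open>A complete oriented flag in R^n (n = CARD('n)) is a pair (F, H):
  F i is the i-dimensional subspace F^i (0 \<le> i \<le> n), and H i (1 \<le> i \<le> n) is the chosen
  open half-space (F^i)^+ of F^i bounded by F^(i-1).\<close>

type_synonym 'n oflag = "(nat \<Rightarrow> (real^'n) set) \<times> (nat \<Rightarrow> (real^'n) set)"

definition is_oriented_flag :: "('n::finite) oflag \<Rightarrow> bool" where
  "is_oriented_flag FH \<longleftrightarrow>
     (let F = fst FH; H = snd FH; n = CARD('n) in
        F 0 = {0} \<and> F n = UNIV \<and>
        (\<forall>i\<le>n. subspace (F i) \<and> dim (F i) = i) \<and>
        (\<forall>i<n. F i \<subseteq> F (Suc i)) \<and>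
        (\<forall>i\<in>{1..n}. \<exists>v \<in> F i - F (i - 1).
            H i = {y + t *\<^sub>R v | y t. y \<in> F (i - 1) \<and> t > 0}))"

text \<open>An oriented k-dimensional subspace W is represented by the set of some of its positive
  ordered bases (lists of vectors); W = span of any of them.\<close>

definition flag_index :: "(real^('n::finite)) list \<Rightarrow> 'n oflag \<Rightarrow> nat" where
  "flag_index ws FH = (THE d. 1 \<le> d \<and> d \<le> length ws + 1 \<and>
       fst FH (d - 1) \<subseteq> span (set ws) \<and> \<not> fst FH d \<subseteq> span (set ws))"

definition bracket_step :: "(real^('n::finite)) list set \<Rightarrow> 'n oflag \<Rightarrow> (real^'n) list set" where
  "bracket_step B FH = {ws @ [x] | ws x. ws \<in> B \<and> x \<in> snd FH (flag_index ws FH)}"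

text \<open>[F_1,...,F_k]; note [F_1] = [{0}, F_1] = F_1^1 with its orientation.\<close>

definition bracket :: "('n::finite) oflag list \<Rightarrow> (real^'n) list set" where
  "bracket Fs = foldl bracket_step {[]} Fs"

definition coord_idx :: "'n::{finite,wellorder} \<Rightarrow> nat" where
  "coord_idx j = card {k. k < j}"

definition vec_or :: "(real^('n::{finite,wellorder})) list \<Rightarrow> real" where
  "vec_or vs = sgn (det (\<chi> i j. (vs ! coord_idx j) $ i))"

definition Or_space :: "(real^('n::{finite,wellorder})) list set \<Rightarrow> real" where
  "Or_space B = vec_or (SOME b. b \<in> B)"

definition omit2 :: "nat \<Rightarrow> nat \<Rightarrow> nat \<Rightarrow> nat list" where
  "omit2 i j m = filter (\<lambda>k. k \<noteq> i \<and> k \<noteq> j) [0..<Suc m]"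

end

theory Submission
  imports Defs
begin


lemma coord_idx_mono:
  fixes i j :: "'n::{finite,wellorder}"
  assumes "i < j" shows "coord_idx i < coord_idx j"
proof -
  have "{k. k < i} \<subset> {k. k < j}" using assms by auto
  then show ?thesis unfolding coord_idx_def by (intro psubset_card_mono) auto
qed

lemma coord_idx_less_iff:
  fixes i j :: "'n::{finite,wellorder}"
  shows "coord_idx i < coord_idx j \<longleftrightarrow> i < j"
  by (metis coord_idx_mono less_asym neqE order_less_irrefl)

lemma coord_idx_inj: "inj (coord_idx :: 'n::{finite,wellorder} \<Rightarrow> nat)"
  by (metis coord_idx_mono injI neqE order_less_irrefl)

lemma coord_idx_lt: "coord_idx (j::'n::{finite,wellorder}) < CARD('n)"
proof -
  have "{k. k < j} \<subset> UNIV" by auto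
  then show ?thesis unfolding coord_idx_def by (intro psubset_card_mono) auto
qed

lemma coord_idx_image: "coord_idx ` (UNIV :: 'n::{finite,wellorder} set) = {..<CARD('n)}"
proof -
  have "coord_idx ` (UNIV :: 'n set) \<subseteq> {..<CARD('n)}" using coord_idx_lt by auto
  moreover have "card (coord_idx ` (UNIV :: 'n set)) = CARD('n)"
    using coord_idx_inj card_image by blast
  ultimately show ?thesis
    by (metis card_lessThan card_subset_eq finite_lessThan)
qed

lemma coord_idx_surj:
  assumes "t < CARD('n::{finite,wellorder})" shows "\<exists>j::'n. coord_idx j = t"
proof -
  have "t \<in> coord_idx ` (UNIV :: 'n set)" using coord_idx_image assms by blast
  then show ?thesis by blast
qed

lemma omit2_facts:
  assumes "i < j" "j \<le> m"
  shows "sorted_wrt (<) (omit2 i j m)" "set (omit2 i j m) = {..m} - {i,j}"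
        "length (omit2 i j m) = m - 1"
proof -
  show s: "sorted_wrt (<) (omit2 i j m)" unfolding omit2_def
    by (intro sorted_wrt_filter) (simp del: upt_Suc)
  show st: "set (omit2 i j m) = {..m} - {i,j}" unfolding omit2_def by auto
  have "distinct (omit2 i j m)" unfolding omit2_def by simp
  then have "length (omit2 i j m) = card ({..m} - {i,j})" using st distinct_card by metis
  also have "\<dots> = Suc m - 2" using assms by (subst card_Diff_subset) auto
  finally show "length (omit2 i j m) = m - 1" by simp
qed



lemma flag_facts:
  assumes "is_oriented_flag (FH :: ('n::finite) oflag)"
  shows "fst FH 0 = {0}" "fst FH CARD('n) = UNIV"
    "\<And>i. i \<le> CARD('n) \<Longrightarrow> subspace (fst FH i) \<and> dim (fst FH i) = i"
    "\<And>i. i < CARD('n) \<Longrightarrow> fst FH i \<subseteq> fst FH (Suc i)"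
    "\<And>i. i \<in> {1..CARD('n)} \<Longrightarrow> \<exists>v \<in> fst FH i - fst FH (i - 1).
            snd FH i = {y + t *\<^sub>R v | y t. y \<in> fst FH (i - 1) \<and> t > 0}"
  using assms unfolding is_oriented_flag_def Let_def by auto

definition fu :: "('n::finite) oflag \<Rightarrow> nat \<Rightarrow> real^'n" where
  "fu FH m = (SOME v. v \<in> fst FH (Suc m) - fst FH m \<and>
      snd FH (Suc m) = {y + t *\<^sub>R v | y t. y \<in> fst FH m \<and> t > 0})"

lemma fu:
  assumes "is_oriented_flag (FH :: ('n::finite) oflag)" "m < CARD('n)"
  shows "fu FH m \<in> fst FH (Suc m) - fst FH m"
    "snd FH (Suc m) = {y + t *\<^sub>R fu FH m | y t. y \<in> fst FH m \<and> t > 0}"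
proof -
  have "\<exists>v. v \<in> fst FH (Suc m) - fst FH m \<and>
      snd FH (Suc m) = {y + t *\<^sub>R v | y t. y \<in> fst FH m \<and> t > 0}"
    using flag_facts(5)[OF assms(1), of "Suc m"] assms(2) by auto
  from someI_ex[OF this] show "fu FH m \<in> fst FH (Suc m) - fst FH m"
    "snd FH (Suc m) = {y + t *\<^sub>R fu FH m | y t. y \<in> fst FH m \<and> t > 0}"
    unfolding fu_def by auto
qed

lemma flag_mono:
  assumes "is_oriented_flag (FH :: ('n::finite) oflag)" "a \<le> b" "b \<le> CARD('n)"
  shows "fst FH a \<subseteq> fst FH b"
  using assms(2,3)
proof (induction b rule: dec_induct)
  case base then show ?case by simp
next
  case (step k) then show ?case using flag_facts(4)[OF assms(1), of k] by auto
qed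

lemma flag_span:
  assumes "is_oriented_flag (FH :: ('n::finite) oflag)" "m < CARD('n)"
  shows "fst FH (Suc m) \<subseteq> span (insert (fu FH m) (fst FH m))"
proof -
  let ?F = "fst FH" and ?v = "fu FH m"
  have sm: "subspace (?F m)" "dim (?F m) = m" using flag_facts(3)[OF assms(1), of m] assms(2) by auto
  have sSm: "subspace (?F (Suc m))" "dim (?F (Suc m)) = Suc m"
    using flag_facts(3)[OF assms(1), of "Suc m"] assms(2) by auto
  have v: "?v \<in> ?F (Suc m)" "?v \<notin> ?F m" using fu(1)[OF assms] by auto
  have sub: "insert ?v (?F m) \<subseteq> ?F (Suc m)"
    using v flag_facts(4)[OF assms(1) assms(2)] by auto
  have S: "span (insert ?v (?F m)) \<subseteq> ?F (Suc m)"
    using span_minimal[OF sub sSm(1)] .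
  have "dim (insert ?v (?F m)) = Suc m"
  proof -
    have "?v \<notin> span (?F m)" using v(2) sm(1) by (metis span_eq_iff)
    then show ?thesis using dim_insert[of ?v "?F m"] sm by simp
  qed
  then have "dim (span (insert ?v (?F m))) \<ge> dim (?F (Suc m))" using sSm by simp
  then have "span (insert ?v (?F m)) = ?F (Suc m)"
    using subspace_dim_equal[OF subspace_span sSm(1) S] by simp
  then show ?thesis by simp
qed

lemma flag_index_step:
  assumes FH: "is_oriented_flag (FH :: ('n::finite) oflag)" and len: "length ws < CARD('n)"
  defines "d \<equiv> LEAST d. \<not> fst FH d \<subseteq> span (set ws)"
  shows "flag_index ws FH = d" "1 \<le> d" "d \<le> length ws + 1"
    "fst FH (d - 1) \<subseteq> span (set ws)" "\<not> fst FH d \<subseteq> span (set ws)"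
proof -
  let ?W = "span (set ws)" and ?F = "fst FH"
  have dW: "dim ?W \<le> length ws"
    using dim_le_card[of ?W "set ws"] card_length[of ws] span_superset by auto
  have ex: "\<not> ?F (length ws + 1) \<subseteq> ?W"
  proof
    assume "?F (length ws + 1) \<subseteq> ?W"
    then have "dim (?F (length ws + 1)) \<le> dim ?W" by (rule dim_subset)
    moreover have "dim (?F (length ws + 1)) = length ws + 1"
      using flag_facts(3)[OF FH, of "length ws + 1"] len by auto
    ultimately show False using dW by simp
  qed
  show dle: "d \<le> length ws + 1" unfolding d_def using ex by (rule Least_le)
  show nd: "\<not> ?F d \<subseteq> ?W" unfolding d_def using ex by (rule LeastI)
  have d0: "d \<noteq> 0" using nd flag_facts(1)[OF FH] span_zero by auto
  then show "1 \<le> d" by simp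
  have "d - 1 < d" using d0 by simp
  then show Fd1: "?F (d - 1) \<subseteq> ?W" using not_less_Least[of "d - 1" "\<lambda>d. \<not> fst FH d \<subseteq> span (set ws)"] unfolding d_def by blast
  show "flag_index ws FH = d" unfolding flag_index_def
  proof (rule the_equality)
    show "1 \<le> d \<and> d \<le> length ws + 1 \<and> ?F (d - 1) \<subseteq> ?W \<and> \<not> ?F d \<subseteq> ?W"
      using d0 dle Fd1 nd by simp
  next
    fix d' assume a: "1 \<le> d' \<and> d' \<le> length ws + 1 \<and> ?F (d' - 1) \<subseteq> ?W \<and> \<not> ?F d' \<subseteq> ?W"
    show "d' = d"
    proof (rule ccontr)
      assume "d' \<noteq> d"
      then consider "d' < d" | "d < d'" by linarith
      then show False
      proof cases
        case 1
        then have "?F d' \<subseteq> ?F (d - 1)" using flag_mono[OF FH, of d' "d - 1"] dle len by auto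
        then show False using a Fd1 by auto
      next
        case 2
        have "d \<le> d' - 1" "d' - 1 \<le> CARD('n)" using 2 a len by auto
        then have "?F d \<subseteq> ?F (d' - 1)" using flag_mono[OF FH, of d "d' - 1"] by blast
        then show False using a nd by auto
      qed
    qed
  qed
qed

lemma halfspace_elem:
  assumes FH: "is_oriented_flag (FH :: ('n::finite) oflag)" and len: "length ws < CARD('n)"
    and x: "x \<in> snd FH (flag_index ws FH)"
  defines "m \<equiv> flag_index ws FH - 1"
  shows "m < CARD('n)" "x \<notin> span (set ws)" "\<exists>s>0. x - s *\<^sub>R fu FH m \<in> span (set ws)"
    "\<And>m'. m' < m \<Longrightarrow> fu FH m' \<in> span (set ws)"
    "fu FH m \<in> snd FH (flag_index ws FH)"
proof -
  let ?W = "span (set ws)" and ?F = "fst FH"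
  note st = flag_index_step[OF FH len]
  have fi: "flag_index ws FH = Suc m" using st(1,2) unfolding m_def by simp
  show mn: "m < CARD('n)" using st(1,2,3) len unfolding m_def by linarith
  have H: "snd FH (Suc m) = {y + t *\<^sub>R fu FH m | y t. y \<in> ?F m \<and> t > 0}" using fu(2)[OF FH mn] .
  have Fm: "?F m \<subseteq> ?W" using st(1,4) unfolding m_def by simp
  have nF: "\<not> ?F (Suc m) \<subseteq> ?W" using st(1,5) fi by simp
  obtain y t where yt: "x = y + t *\<^sub>R fu FH m" "y \<in> ?F m" "t > 0" using x H fi by auto
  show "\<exists>s>0. x - s *\<^sub>R fu FH m \<in> ?W" using yt Fm by (intro exI[of _ t]) auto
  show "x \<notin> ?W"
  proof
    assume "x \<in> ?W"
    then have "(1/t) *\<^sub>R (x - y) \<in> ?W" using yt Fm by (intro span_scale span_diff) auto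
    moreover have "(1/t) *\<^sub>R (x - y) = fu FH m" using yt by auto
    ultimately have "insert (fu FH m) (?F m) \<subseteq> ?W" using Fm by auto
    then have "span (insert (fu FH m) (?F m)) \<subseteq> ?W" by (simp add: span_minimal)
    then show False using flag_span[OF FH mn] nF by auto
  qed
  show "\<And>m'. m' < m \<Longrightarrow> fu FH m' \<in> ?W"
  proof -
    fix m' assume "m' < m"
    then have "fu FH m' \<in> ?F (Suc m')" "?F (Suc m') \<subseteq> ?F m"
      using fu(1)[OF FH, of m'] mn flag_mono[OF FH, of "Suc m'" m] by auto
    then show "fu FH m' \<in> ?W" using Fm by auto
  qed
  show "fu FH m \<in> snd FH (flag_index ws FH)"
  proof -
    have "0 \<in> ?F m" using flag_facts(3)[OF FH, of m] mn by (auto simp: subspace_0)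
    moreover have "fu FH m = 0 + 1 *\<^sub>R fu FH m" by simp
    ultimately show ?thesis unfolding fi H by (smt (verit, best) mem_Collect_eq)
  qed
qed

lemma fu_half:
  assumes FH: "is_oriented_flag (FH :: ('n::finite) oflag)" and len: "length ws < CARD('n)"
  shows "fu FH (flag_index ws FH - 1) \<in> snd FH (flag_index ws FH)"
proof -
  define m where "m = flag_index ws FH - 1"
  note st = flag_index_step[OF FH len]
  have fi: "flag_index ws FH = Suc m" using st(1,2) unfolding m_def by simp
  have mn: "m < CARD('n)" using st(1,2,3) len unfolding m_def by linarith
  have H: "snd FH (Suc m) = {y + t *\<^sub>R fu FH m | y t. y \<in> fst FH m \<and> t > 0}" using fu(2)[OF FH mn] .
  have "0 \<in> fst FH m" using flag_facts(3)[OF FH, of m] mn by (auto simp: subspace_0)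
  moreover have "fu FH m = 0 + 1 *\<^sub>R fu FH m" by simp
  ultimately have "fu FH m \<in> snd FH (Suc m)" unfolding H by (smt (verit, best) mem_Collect_eq)
  then show ?thesis using fi unfolding m_def by simp
qed



definition binv :: "(nat \<Rightarrow> ('n::finite) oflag) \<Rightarrow> nat list \<Rightarrow> (real^'n) list \<Rightarrow> nat list \<Rightarrow> bool" where
  "binv Fl ks b \<mu> \<longleftrightarrow> length b = length ks \<and> length \<mu> = length ks \<and>
     (\<forall>t<length ks. \<mu>!t < CARD('n) \<and>
        (\<forall>m<\<mu>!t. fu (Fl (ks!t)) m \<in> span (set (take t b))) \<and>
        (\<exists>s>0. b!t - s *\<^sub>R fu (Fl (ks!t)) (\<mu>!t) \<in> span (set (take t b))) \<and>
        b!t \<notin> span (set (take t b)))"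

lemma bracket_snoc: "bracket (Fs @ [F]) = bracket_step (bracket Fs) F"
  by (simp add: bracket_def)

lemma bracket_inv:
  fixes Fl :: "nat \<Rightarrow> ('n::finite) oflag"
  assumes "\<forall>k\<in>set ks. is_oriented_flag (Fl k)" "length ks \<le> CARD('n::finite)"
  shows "bracket (map Fl ks) \<noteq> {} \<and> (\<forall>b \<in> bracket (map Fl ks). \<exists>\<mu>. binv Fl ks b \<mu>)"
  using assms
proof (induction ks rule: rev_induct)
  case Nil
  then show ?case by (auto simp: bracket_def binv_def intro!: exI[of _ "[]"])
next
  case (snoc k ks)
  have FH: "is_oriented_flag (Fl k)" using snoc.prems by auto
  have IH: "bracket (map Fl ks) \<noteq> {}" "\<forall>b \<in> bracket (map Fl ks). \<exists>\<mu>. binv Fl ks b \<mu>"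
    using snoc by auto
  have lk: "length ks < CARD('n)" using snoc.prems by simp
  have br: "bracket (map Fl (ks @ [k])) = bracket_step (bracket (map Fl ks)) (Fl k)"
    by (simp add: bracket_snoc)
  show ?case
  proof
    obtain b where b: "b \<in> bracket (map Fl ks)" using IH(1) by auto
    then obtain \<mu> where "binv Fl ks b \<mu>" using IH(2) by auto
    then have lb: "length b < CARD('n)" using lk by (simp add: binv_def)
    have "b @ [fu (Fl k) (flag_index b (Fl k) - 1)] \<in> bracket (map Fl (ks @ [k]))"
      unfolding br bracket_step_def using b fu_half[OF FH lb] by blast
    then show "bracket (map Fl (ks @ [k])) \<noteq> {}" by auto
  next
    show "\<forall>b\<in>bracket (map Fl (ks @ [k])). \<exists>\<mu>. binv Fl (ks @ [k]) b \<mu>"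
    proof
      fix b' assume "b' \<in> bracket (map Fl (ks @ [k]))"
      then obtain b x where b': "b' = b @ [x]" and b: "b \<in> bracket (map Fl ks)"
        and x: "x \<in> snd (Fl k) (flag_index b (Fl k))"
        unfolding br bracket_step_def by auto
      obtain \<mu> where mu: "binv Fl ks b \<mu>" using IH(2) b by auto
      have lb: "length b = length ks" "length \<mu> = length ks" using mu by (auto simp: binv_def)
      then have lb': "length b < CARD('n)" using lk by simp
      note he = halfspace_elem[OF FH lb' x]
      define m where "m = flag_index b (Fl k) - 1"
      have L: "length b' = length (ks @ [k])" "length (\<mu> @ [m]) = length (ks @ [k])"
          using lb b' by auto
      have P: "\<forall>t<length (ks @ [k]). (\<mu> @ [m]) ! t < CARD('n) \<and>
          (\<forall>ma<(\<mu> @ [m]) ! t. fu (Fl ((ks @ [k]) ! t)) ma \<in> span (set (take t b'))) \<and>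
          (\<exists>s>0. b' ! t - s *\<^sub>R fu (Fl ((ks @ [k]) ! t)) ((\<mu> @ [m]) ! t) \<in> span (set (take t b'))) \<and>
          b' ! t \<notin> span (set (take t b'))"
      proof (intro allI impI)
        fix t assume t: "t < length (ks @ [k])"
        show "(\<mu> @ [m]) ! t < CARD('n) \<and>
          (\<forall>ma<(\<mu> @ [m]) ! t. fu (Fl ((ks @ [k]) ! t)) ma \<in> span (set (take t b'))) \<and>
          (\<exists>s>0. b' ! t - s *\<^sub>R fu (Fl ((ks @ [k]) ! t)) ((\<mu> @ [m]) ! t) \<in> span (set (take t b'))) \<and>
          b' ! t \<notin> span (set (take t b'))"
        proof (cases "t < length ks")
          case True
          then show ?thesis using mu lb unfolding binv_def b' by (simp add: nth_append)
        next
          case False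
          then have tk: "t = length ks" using t by simp
          then show ?thesis using he lb unfolding b' m_def by (simp add: nth_append)
        qed
      qed
      have "binv Fl (ks @ [k]) b' (\<mu> @ [m])" unfolding binv_def using L P by blast
      then show "\<exists>\<mu>. binv Fl (ks @ [k]) b' \<mu>" by blast
    qed
  qed
qed

lemma span_insert_swap:
  assumes "y - s *\<^sub>R v \<in> span A" "s \<noteq> 0" "span A = span A'"
  shows "span (insert y A) = span (insert v A')"
proof -
  have A: "A \<subseteq> span (insert v A')" using assms(3) span_superset span_mono
    by (metis subset_insertI order_trans)
  have y: "y = s *\<^sub>R v + (y - s *\<^sub>R v)" by simp
  have "y \<in> span (insert v A')"
    by (subst y, intro span_add span_scale) (use assms(1) A span_mono[OF A] in \<open>auto simp: span_base span_span\<close>)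
  have A': "A' \<subseteq> span (insert y A)" using assms(3) span_superset span_mono
    by (metis subset_insertI order_trans)
  have v: "v = (1/s) *\<^sub>R (y - (y - s *\<^sub>R v))" using assms(2) by simp
  have "v \<in> span (insert y A)"
  proof -
    have "y \<in> span (insert y A)" by (simp add: span_base)
    moreover have "y - s *\<^sub>R v \<in> span (insert y A)" using assms(1) span_mono[of A "insert y A"] by auto
    ultimately have "(1/s) *\<^sub>R (y - (y - s *\<^sub>R v)) \<in> span (insert y A)" by (rule span_scale[OF span_diff])
    then show ?thesis using v by metis
  qed
  show ?thesis unfolding span_eq
    using \<open>y \<in> span (insert v A')\<close> \<open>v \<in> span (insert y A)\<close> A A' by auto
qed

lemma binv_span:
  assumes "binv Fl ks b \<mu>" "t \<le> length ks"
  shows "span (set (take t b)) = span ((\<lambda>s. fu (Fl (ks!s)) (\<mu>!s)) ` {..<t})"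
  using assms(2)
proof (induction t)
  case 0 then show ?case by simp
next
  case (Suc t)
  have lt: "t < length ks" using Suc by simp
  have lb: "length b = length ks" using assms(1) by (simp add: binv_def)
  have tk: "take (Suc t) b = take t b @ [b!t]" using lt lb by (simp add: take_Suc_conv_app_nth)
  obtain s where s: "s > 0" "b!t - s *\<^sub>R fu (Fl (ks!t)) (\<mu>!t) \<in> span (set (take t b))"
    using assms(1) lt unfolding binv_def by blast
  have "span (set (take (Suc t) b)) = span (insert (b!t) (set (take t b)))" using tk by simp
  also have "\<dots> = span (insert (fu (Fl (ks!t)) (\<mu>!t)) ((\<lambda>s. fu (Fl (ks!s)) (\<mu>!s)) ` {..<t}))"
    using span_insert_swap[OF s(2)] s(1) Suc.IH lt by simp
  also have "\<dots> = span ((\<lambda>s. fu (Fl (ks!s)) (\<mu>!s)) ` {..<Suc t})"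
    by (simp add: lessThan_Suc)
  finally show ?case .
qed

lemma binv_dim:
  assumes "binv Fl ks b \<mu>" "t \<le> length ks"
  shows "dim (set (take t b)) = t"
  using assms(2)
proof (induction t)
  case 0 then show ?case by simp
next
  case (Suc t)
  have lt: "t < length ks" using Suc by simp
  have lb: "length b = length ks" using assms(1) by (simp add: binv_def)
  have tk: "take (Suc t) b = take t b @ [b!t]" using lt lb by (simp add: take_Suc_conv_app_nth)
  have "b!t \<notin> span (set (take t b))" using assms(1) lt unfolding binv_def by blast
  then show ?case using tk Suc dim_insert[of "b!t" "set (take t b)"] lt by simp
qed

lemma span_image_repr:
  assumes "finite A" "x \<in> span (f ` A)"
  shows "\<exists>c. x = (\<Sum>a\<in>A. c a *\<^sub>R f a)"
  using assms
proof (induction A arbitrary: x rule: finite_induct)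
  case empty then show ?case by simp
next
  case (insert a A)
  have "x \<in> span (insert (f a) (f ` A))" using insert.prems by simp
  then obtain k where k: "x - k *\<^sub>R f a \<in> span (f ` A)" by (auto simp: span_insert)
  obtain c where c: "x - k *\<^sub>R f a = (\<Sum>a\<in>A. c a *\<^sub>R f a)" using insert.IH[OF k] by blast
  have "(\<Sum>b\<in>A. (c(a:=k)) b *\<^sub>R f b) = (\<Sum>b\<in>A. c b *\<^sub>R f b)"
    using insert.hyps by (intro sum.cong) auto
  then have "x = (\<Sum>b\<in>insert a A. (c(a := k)) b *\<^sub>R f b)"
    using insert.hyps c by (simp add: algebra_simps)
  then show ?case by blast
qed



lemma sum_coord_reindex:
  fixes g :: "nat \<Rightarrow> 'b::comm_monoid_add"
  shows "(\<Sum>j'\<in>{j'::'n::{finite,wellorder}. coord_idx j' < t}. g (coord_idx j')) = (\<Sum>r<min t CARD('n). g r)"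
proof -
  have "coord_idx ` {j'::'n. coord_idx j' < t} = {..<min t CARD('n)}"
  proof (intro set_eqI iffI)
    fix r assume "r \<in> coord_idx ` {j'::'n. coord_idx j' < t}"
    then show "r \<in> {..<min t CARD('n)}" using coord_idx_lt by auto
  next
    fix r assume r: "r \<in> {..<min t CARD('n)}"
    then obtain j :: 'n where "coord_idx j = r" using coord_idx_surj by auto
    then show "r \<in> coord_idx ` {j'::'n. coord_idx j' < t}" using r by auto
  qed
  moreover have "inj_on coord_idx {j'::'n. coord_idx j' < t}"
    using coord_idx_inj inj_on_subset by blast
  ultimately show ?thesis using sum.reindex[of coord_idx "{j'::'n. coord_idx j' < t}" g]
    by simp
qed

lemma binv_det:
  fixes Fl :: "nat \<Rightarrow> ('n::{finite,wellorder}) oflag"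
  assumes bi: "binv Fl ks b \<mu>" and len: "length ks = CARD('n)"
  defines "V \<equiv> \<lambda>s. fu (Fl (ks!s)) (\<mu>!s)"
  shows "det (\<chi> j. V (coord_idx j)) \<noteq> 0 \<and>
     sgn (det (\<chi> j. b ! coord_idx j)) = sgn (det (\<chi> j. V (coord_idx j)))"
proof -
  let ?n = "CARD('n)"
  have lb: "length b = ?n" using bi len by (simp add: binv_def)
  have "\<forall>t\<in>{..<?n}. \<exists>p. fst p > (0::real) \<and> b!t = fst p *\<^sub>R V t + (\<Sum>r<t. snd p r *\<^sub>R V r)"
  proof
    fix t assume "t \<in> {..<?n}"
    then have t: "t < length ks" using len by simp
    obtain s where s: "s > 0" "b!t - s *\<^sub>R V t \<in> span (set (take t b))"
      using bi t unfolding binv_def V_def by blast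
    have "b!t - s *\<^sub>R V t \<in> span (V ` {..<t})"
      using s(2) binv_span[OF bi, of t] t unfolding V_def by simp
    then obtain c where "b!t - s *\<^sub>R V t = (\<Sum>r<t. c r *\<^sub>R V r)"
      using span_image_repr[of "{..<t}"] by blast
    then have "b!t = s *\<^sub>R V t + (\<Sum>r<t. c r *\<^sub>R V r)" by (simp add: algebra_simps)
    then show "\<exists>p. fst p > (0::real) \<and> b!t = fst p *\<^sub>R V t + (\<Sum>r<t. snd p r *\<^sub>R V r)"
      using s(1) by (intro exI[of _ "(s, c)"]) simp
  qed
  then obtain P where P: "\<And>t. t < ?n \<Longrightarrow> fst (P t) > (0::real) \<and>
      b!t = fst (P t) *\<^sub>R V t + (\<Sum>r<t. snd (P t) r *\<^sub>R V r)"
    using bchoice[of "{..<?n}"] by (metis lessThan_iff)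
  define T where "T = (\<chi> (j::'n) (j'::'n). if j' = j then fst (P (coord_idx j))
      else if coord_idx j' < coord_idx j then snd (P (coord_idx j)) (coord_idx j') else 0)"
  let ?Br = "(\<chi> (j::'n). b ! coord_idx j)"
  let ?Vr = "(\<chi> (j::'n). V (coord_idx j))"
  have BT: "?Br = T ** ?Vr"
  proof (subst matrix_mul_sum_alt, rule vec_eq_iff[THEN iffD2], intro allI)
    fix j :: 'n
    let ?c = "coord_idx j"
    have "(\<Sum>k\<in>UNIV. T $ j $ k *s ?Vr $ k) =
      (\<Sum>k\<in>UNIV. (if k = j then fst (P ?c) *\<^sub>R V ?c else 0) +
          (if coord_idx k < ?c then snd (P ?c) (coord_idx k) *\<^sub>R V (coord_idx k) else 0))"
      by (intro sum.cong) (auto simp: T_def scalar_mult_eq_scaleR)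
    also have "\<dots> = fst (P ?c) *\<^sub>R V ?c + (\<Sum>k\<in>{k::'n. coord_idx k < ?c}. snd (P ?c) (coord_idx k) *\<^sub>R V (coord_idx k))"
      by (simp add: sum.distrib sum.If_cases)
    also have "\<dots> = fst (P ?c) *\<^sub>R V ?c + (\<Sum>r<?c. snd (P ?c) r *\<^sub>R V r)"
      using sum_coord_reindex[where 'n='n, of "\<lambda>r. snd (P ?c) r *\<^sub>R V r" ?c] coord_idx_lt[of j]
      by simp
    also have "\<dots> = b ! ?c" using P[OF coord_idx_lt[of j]] by simp
    finally show "?Br $ j = (\<chi> i. \<Sum>k\<in>UNIV. T $ i $ k *s ?Vr $ k) $ j" by simp
  qed
  have detT: "det T = (\<Prod>j::'n\<in>UNIV. fst (P (coord_idx j)))"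
  proof -
    have "det T = (\<Prod>j\<in>UNIV. T$j$j)"
      by (rule det_lowerdiagonal) (auto simp: T_def coord_idx_less_iff dest: less_asym)
    then show ?thesis by (simp add: T_def)
  qed
  have detT_pos: "det T > 0" unfolding detT
    by (intro prod_pos) (use P coord_idx_lt in blast)
  have "rows ?Br = set b"
  proof -
    have "rows ?Br = {b ! coord_idx (j::'n) | j. True}" by (auto simp: rows_def row_def vec_eq_iff)
    also have "\<dots> = {b ! t | t. t < ?n}"
    proof (intro set_eqI iffI)
      fix x assume "x \<in> {b ! coord_idx (j::'n) | j. True}"
      then show "x \<in> {b ! t | t. t < ?n}" using coord_idx_lt by blast
    next
      fix x assume "x \<in> {b ! t | t. t < ?n}"
      then obtain t where t: "x = b ! t" "t < ?n" by blast
      then obtain j :: 'n where "coord_idx j = t" using coord_idx_surj by blast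
      then show "x \<in> {b ! coord_idx (j::'n) | j. True}" using t by blast
    qed
    also have "\<dots> = set b" using lb by (auto simp: set_conv_nth)
    finally show ?thesis .
  qed
  moreover have "dim (set b) = ?n" using binv_dim[OF bi, of ?n] len lb by simp
  ultimately have "rank ?Br = ?n" by (simp add: row_rank_def)
  then have dB: "det ?Br \<noteq> 0" by (simp add: det_eq_0_rank)
  have "det ?Br = det T * det ?Vr" by (simp only: BT det_mul)
  then show ?thesis using dB detT_pos by (auto simp: sgn_mult)
qed



lemma row_eq: "row i A = A $ i"
  by (simp add: row_def vec_eq_iff)

lemma det_row_in_span:
  fixes A :: "real^'n^'n"
  assumes "A$i \<in> span {A$j | j. j \<noteq> i}"
  shows "det A = 0"
proof -
  have "- row i A \<in> vec.span {row j A | j. j \<noteq> i}"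
    using assms unfolding span_vec_eq row_eq by (rule span_neg)
  from det_row_span[OF this] have "det (\<chi> k. if k = i then row i A + - row i A else row k A) = det A" .
  moreover have "det (\<chi> k. if k = i then row i A + - row i A else row k A) = 0"
    by (rule det_zero_row(1)[of i]) (simp add: row_def vec_eq_iff)
  ultimately show ?thesis by simp
qed

lemma vec_or_alt:
  fixes vs :: "(real^('n::{finite,wellorder})) list"
  shows "vec_or vs = sgn (det (\<chi> (j::'n). vs ! coord_idx j))"
proof -
  have "(\<chi> i (j::'n). (vs ! coord_idx j) $ i) = transpose (\<chi> (j::'n). vs ! coord_idx j)"
    by (simp add: transpose_def vec_eq_iff)
  then show ?thesis unfolding vec_or_def by (simp only: det_transpose)
qed

lemma weight_lemma:
  fixes Wj f g :: "'n::{finite,wellorder} \<Rightarrow> nat"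
  assumes eq: "\<forall>j<j0. f j = g j" and lt: "g j0 < f j0" and gb: "\<forall>j. g j \<le> CARD('n)"
    and W: "\<forall>j. j0 < j \<longrightarrow> Wj j * CARD('n) * CARD('n) < Wj j0" and W0: "Wj j0 > 0"
  shows "(\<Sum>j\<in>UNIV. Wj j * g j) < (\<Sum>j\<in>UNIV. Wj j * f j)"
proof -
  let ?n = "CARD('n)"
  have split: "(\<Sum>j\<in>UNIV. h j) = (\<Sum>j\<in>{j. j < j0}. h j) + h j0 + (\<Sum>j\<in>{j. j0 < j}. h j)"
    for h :: "'n \<Rightarrow> nat"
  proof -
    have U: "UNIV = {j. j < j0} \<union> ({j0} \<union> {j. j0 < j})" by auto
    show ?thesis unfolding U
      by (subst sum.union_disjoint; auto simp: sum.union_disjoint)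
  qed
  let ?J = "{j. j0 < j}"
  have n0: "?n > 0" by simp
  have "(\<Sum>j\<in>?J. Wj j * ?n) * ?n = (\<Sum>j\<in>?J. Wj j * ?n * ?n)" by (simp add: sum_distrib_right)
  also have "\<dots> \<le> (\<Sum>j\<in>?J. Wj j0 - 1)" using W by (intro sum_mono) fastforce
  also have "\<dots> = card ?J * (Wj j0 - 1)" by simp
  also have "\<dots> \<le> ?n * (Wj j0 - 1)" by (intro mult_right_mono) (simp_all add: card_mono)
  finally have "(\<Sum>j\<in>?J. Wj j * ?n) \<le> Wj j0 - 1" using n0 by (simp add: mult.commute)
  moreover have "(\<Sum>j\<in>?J. Wj j * g j) \<le> (\<Sum>j\<in>?J. Wj j * ?n)" using gb by (intro sum_mono) simp
  ultimately have J: "(\<Sum>j\<in>?J. Wj j * g j) < Wj j0" using W0 by linarith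
  have A: "(\<Sum>j\<in>{j. j < j0}. Wj j * g j) = (\<Sum>j\<in>{j. j < j0}. Wj j * f j)"
    using eq by (intro sum.cong) auto
  have "Wj j0 * g j0 + Wj j0 \<le> Wj j0 * f j0"
    using lt by (metis add.commute mult.commute mult_Suc mult_le_mono1 Suc_leI)
  then show ?thesis using split[of "\<lambda>j. Wj j * g j"] split[of "\<lambda>j. Wj j * f j"] A J by linarith
qed



definition Wt :: "nat \<Rightarrow> nat \<Rightarrow> nat" where
  "Wt n k = (n * n + 1) ^ (n + 1 - k)"

definition xv :: "(nat \<Rightarrow> ('n::finite) oflag) \<Rightarrow> real \<Rightarrow> nat \<Rightarrow> real^'n" where
  "xv Fl e k = (\<Sum>m<CARD('n). (e ^ (Wt CARD('n) k * m)) *\<^sub>R fu (Fl k) m)"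

lemma Wt_lt:
  assumes "k0 < k" "k \<le> n + 1"
  shows "Wt n k * n * n < Wt n k0"
proof -
  let ?B = "n * n + 1"
  have "Wt n k * n * n < Wt n k * ?B" unfolding Wt_def by simp
  also have "\<dots> = ?B ^ (n + 1 - k + 1)" unfolding Wt_def by simp
  also have "\<dots> \<le> ?B ^ (n + 1 - k0)" using assms by (intro power_increasing) auto
  finally show ?thesis unfolding Wt_def .
qed

lemma det_linear_rows_sum_lemma_gen:
  assumes fS: "finite S"
    and fT: "finite T"
  shows "det ((\<chi> i. if i \<in> T then sum (a i) S else c i):: 'a::comm_ring_1^'n^'n) =
    sum (\<lambda>f. det((\<chi> i. if i \<in> T then a i (f i) else c i)::'a^'n^'n))
      {f. (\<forall>i \<in> T. f i \<in> S) \<and> (\<forall>i. i \<notin> T \<longrightarrow> f i = undefined)}"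
  using fT
proof (induct T arbitrary: a c set: finite)
  case empty
  have th0: "\<And>x y. (\<chi> i. if i \<in> {} then x i else y i) = (\<chi> i. y i)"
    by vector
  have "{f. \<forall>i. f i = undefined} = {\<lambda>i. undefined}" by auto
  from empty.prems show ?case
    unfolding th0 by (simp add: \<open>{f. \<forall>i. f i = undefined} = {\<lambda>i. undefined}\<close>)
next
  case (insert z T a c)
  let ?F = "\<lambda>T. {f. (\<forall>i \<in> T. f i \<in> S) \<and> (\<forall>i. i \<notin> T \<longrightarrow> f i = undefined)}"
  let ?h = "\<lambda>(y,g) i. if i = z then y else g i"
  let ?k = "\<lambda>h. (h(z),(\<lambda>i. if i = z then undefined else h i))"
  let ?s = "\<lambda> k a c f. det((\<chi> i. if i \<in> T then a i (f i) else c i)::'a^'n^'n)"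
  let ?c = "\<lambda>j i. if i = z then a i j else c i"
  have thif: "\<And>a b c d. (if a \<or> b then c else d) = (if a then c else if b then c else d)"
    by simp
  have thif2: "\<And>a b c d e. (if a then b else if c then d else e) =
     (if c then (if a then b else d) else (if a then b else e))"
    by simp
  from \<open>z \<notin> T\<close> have nz: "\<And>i. i \<in> T \<Longrightarrow> i \<noteq> z"
    by auto
  have "det (\<chi> i. if i \<in> insert z T then sum (a i) S else c i) =
    det (\<chi> i. if i = z then sum (a i) S else if i \<in> T then sum (a i) S else c i)"
    unfolding insert_iff thif ..
  also have "\<dots> = (\<Sum>j\<in>S. det (\<chi> i. if i \<in> T then sum (a i) S else if i = z then a i j else c i))"
    unfolding det_linear_row_sum[OF fS]
    by (subst thif2) (simp add: nz cong: if_cong)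
  finally have tha:
    "det (\<chi> i. if i \<in> insert z T then sum (a i) S else c i) =
     (\<Sum>(j, f)\<in>S \<times> ?F T. det (\<chi> i. if i \<in> T then a i (f i)
                                else if i = z then a i j
                                else c i))"
    unfolding insert.hyps unfolding sum.cartesian_product by blast
  show ?case unfolding tha
    using \<open>z \<notin> T\<close>
    by (intro sum.reindex_bij_witness[where i="?k" and j="?h"])
       (auto intro!: cong[OF refl[of det]] simp: vec_eq_iff)
qed

lemma det_linear_rows_sum_gen:
  assumes fS: "finite S"
  shows "det (\<chi> i. sum (a i) S) =
    sum (\<lambda>f. det (\<chi> i. a i (f i) :: 'a::comm_ring_1 ^ 'n^'n)) {f. \<forall>i. f i \<in> S}"
proof -
  have th0: "\<And>x y. ((\<chi> i. if i \<in> (UNIV:: 'n set) then x i else y i) :: 'a^'n^'n) = (\<chi> i. x i)"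
    by vector
  from det_linear_rows_sum_lemma_gen[OF fS, of "UNIV :: 'n set" a, unfolded th0, OF finite]
  show ?thesis by simp
qed

lemma det_expand:
  fixes u :: "'n::{finite,wellorder} \<Rightarrow> nat \<Rightarrow> (real, 'n) vec" and Wj :: "'n \<Rightarrow> nat"
  shows "det (\<chi> j. \<Sum>m<N. (e ^ (Wj j * m)) *\<^sub>R u j m) =
    (\<Sum>f\<in>{f. \<forall>j. f j \<in> {..<N}}. e ^ (\<Sum>j\<in>UNIV. Wj j * f j) * det (\<chi> j. u j (f j)))"
proof -
  have "det (\<chi> j. \<Sum>m<N. (e ^ (Wj j * m)) *\<^sub>R u j m) =
     (\<Sum>f\<in>{f. \<forall>j. f j \<in> {..<N}}. det (\<chi> j. (e ^ (Wj j * f j)) *\<^sub>R u j (f j)))"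
    using det_linear_rows_sum_gen[of "{..<N}" "\<lambda>j m. (e ^ (Wj j * m)) *\<^sub>R u j m"] by simp
  also have "\<dots> = (\<Sum>f\<in>{f. \<forall>j. f j \<in> {..<N}}. e ^ (\<Sum>j\<in>UNIV. Wj j * f j) * det (\<chi> j. u j (f j)))"
  proof (intro sum.cong refl)
    fix f :: "'n \<Rightarrow> nat"
    have "det (\<chi> j. (e ^ (Wj j * f j)) *\<^sub>R u j (f j)) = (\<Prod>j\<in>UNIV. e ^ (Wj j * f j)) * det (\<chi> j. u j (f j))"
      using det_rows_mul[of "\<lambda>j. e ^ (Wj j * f j)" "\<lambda>j. u j (f j)"] by (simp add: scalar_mult_eq_scaleR)
    then show "det (\<chi> j. (e ^ (Wj j * f j)) *\<^sub>R u j (f j)) = e ^ (\<Sum>j\<in>UNIV. Wj j * f j) * det (\<chi> j. u j (f j))"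
      by (simp add: power_sum)
  qed
  finally show ?thesis .
qed

lemma pair_eventually:
  fixes Fl :: "nat \<Rightarrow> ('n::{finite,wellorder}) oflag"
  assumes bi: "binv Fl ks b \<mu>" and len: "length ks = CARD('n)" and srt: "sorted_wrt (<) ks"
    and bd: "\<forall>k\<in>set ks. k \<le> CARD('n) + 1"
  shows "eventually (\<lambda>e. vec_or (map (xv Fl e) ks) = vec_or b) (at_right 0)"
proof -
  let ?n = "CARD('n)"
  define u where "u = (\<lambda>(j::'n) m. fu (Fl (ks ! coord_idx j)) m)"
  define Wj where "Wj = (\<lambda>(j::'n). Wt ?n (ks ! coord_idx j))"
  define g where "g = (\<lambda>(j::'n). \<mu> ! coord_idx j)"
  define S where "S = {f::'n \<Rightarrow> nat. \<forall>j. f j \<in> {..<?n}}"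
  define D where "D = (\<lambda>f::'n\<Rightarrow>nat. det (\<chi> j. u j (f j)))"
  define E where "E = (\<lambda>f::'n\<Rightarrow>nat. \<Sum>j\<in>UNIV. Wj j * f j)"
  define V where "V = (\<lambda>s. fu (Fl (ks!s)) (\<mu>!s))"
  have lb: "length b = ?n" "length \<mu> = ?n" using bi len by (auto simp: binv_def)
  have bdet: "D g \<noteq> 0 \<and> sgn (det (\<chi> j. b ! coord_idx j)) = sgn (D g)"
    using binv_det[OF bi len] by (simp add: D_def u_def g_def)
  then have Dg: "D g \<noteq> 0" and sb: "vec_or b = sgn (D g)" by (auto simp: vec_or_alt)
  have gS: "g \<in> S" using bi lb coord_idx_lt unfolding binv_def g_def S_def by (auto simp: len)
  have finS: "finite S"
  proof -
    have "S = Pi\<^sub>E UNIV (\<lambda>_. {..<?n})" by (auto simp: S_def PiE_UNIV_domain Pi_def)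
    then show ?thesis by (simp add: finite_PiE)
  qed
  have expand: "det (\<chi> j. map (xv Fl e) ks ! coord_idx j) = (\<Sum>f\<in>S. e^(E f) * D f)" for e
  proof -
    have "(\<chi> j. map (xv Fl e) ks ! coord_idx j) = (\<chi> j. \<Sum>m<?n. (e ^ (Wj j * m)) *\<^sub>R u j m)"
    proof -
      have cj: "coord_idx (j::'n) < length ks" for j using coord_idx_lt len by metis
      show ?thesis by (simp add: xv_def Wj_def u_def cj)
    qed
    then show ?thesis using det_expand[where e=e and Wj=Wj and N="?n" and u=u] by (simp add: S_def E_def D_def)
  qed
  have key: "E g < E f" if fS: "f \<in> S" and Df: "D f \<noteq> 0" and fg: "f \<noteq> g" for f
  proof -
    have ex: "\<exists>j. f j \<noteq> g j" using fg by (auto simp: fun_eq_iff)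
    define j0 where "j0 = (LEAST j. f j \<noteq> g j)"
    have nj0: "f j0 \<noteq> g j0" using LeastI_ex[OF ex] unfolding j0_def .
    have eqb: "\<forall>j<j0. f j = g j" using not_less_Least unfolding j0_def by blast
    consider "f j0 < g j0" | "g j0 < f j0" using nj0 by linarith
    then show ?thesis
    proof cases
      case 1
      let ?t0 = "coord_idx j0"
      have t0: "?t0 < length ks" using coord_idx_lt len by simp
      have "u j0 (f j0) \<in> span (set (take ?t0 b))"
        using bi t0 1 unfolding binv_def u_def g_def by blast
      also have "\<dots> = span (V ` {..<?t0})" using binv_span[OF bi, of ?t0] t0 by (simp add: V_def)
      finally have in1: "u j0 (f j0) \<in> span (V ` {..<?t0})" .
      have sub: "V ` {..<?t0} \<subseteq> {(\<chi> j. u j (f j)) $ j | j. j \<noteq> j0}"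
      proof
        fix v assume "v \<in> V ` {..<?t0}"
        then obtain s where s: "s < ?t0" "v = V s" by auto
        have "s < CARD('n)" using s coord_idx_lt[of j0] by linarith
        then obtain j :: 'n where j: "coord_idx j = s" using coord_idx_surj by blast
        then have "j < j0" using s coord_idx_less_iff by metis
        then have "f j = g j" "j \<noteq> j0" using eqb by auto
        then have "v = (\<chi> j. u j (f j)) $ j" using s j by (simp add: V_def u_def g_def)
        then show "v \<in> {(\<chi> j. u j (f j)) $ j | j. j \<noteq> j0}" using \<open>j \<noteq> j0\<close> by blast
      qed
      have "(\<chi> j. u j (f j)) $ j0 \<in> span {(\<chi> j. u j (f j)) $ j | j. j \<noteq> j0}"
        using in1 span_mono[OF sub] by auto
      then have "D f = 0" unfolding D_def by (rule det_row_in_span)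
      then show ?thesis using Df by simp
    next
      case 2
      have gb: "\<forall>j. g j \<le> ?n" using gS unfolding S_def by (simp add: less_imp_le)
      have W: "\<forall>j. j0 < j \<longrightarrow> Wj j * ?n * ?n < Wj j0"
      proof (intro allI impI)
        fix j :: 'n assume "j0 < j"
        then have "coord_idx j0 < coord_idx j" by (simp add: coord_idx_less_iff)
        then have "ks ! coord_idx j0 < ks ! coord_idx j"
          using sorted_wrt_nth_less[OF srt] coord_idx_lt[of j] len by simp
        moreover have "ks ! coord_idx j \<le> ?n + 1" using bd coord_idx_lt[of j] len by simp
        ultimately show "Wj j * ?n * ?n < Wj j0" unfolding Wj_def by (rule Wt_lt)
      qed
      have W0: "Wj j0 > 0" by (simp add: Wj_def Wt_def)
      show ?thesis unfolding E_def using weight_lemma[OF eqb 2 gb W W0] .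
    qed
  qed
  define h where "h = (\<lambda>e::real. \<Sum>f\<in>S. e^(E f - E g) * D f)"
  have fac: "(\<Sum>f\<in>S. e^(E f) * D f) = e^(E g) * h e" for e :: real
    unfolding h_def sum_distrib_left
  proof (intro sum.cong refl)
    fix f assume f: "f \<in> S"
    show "e ^ E f * D f = e ^ E g * (e ^ (E f - E g) * D f)"
    proof (cases "D f = 0 \<or> f = g")
      case True then show ?thesis by auto
    next
      case False
      then have "E g \<le> E f" using key[OF f] by fastforce
      then show ?thesis by (simp add: power_add[symmetric])
    qed
  qed
  have h0: "(\<Sum>f\<in>S. (0::real)^(E f - E g) * D f) = D g"
  proof -
    have "(\<Sum>f\<in>S. (0::real)^(E f - E g) * D f) = 0^(E g - E g) * D g + (\<Sum>f\<in>S - {g}. (0::real)^(E f - E g) * D f)"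
      using finS gS by (simp add: sum.remove)
    moreover have "(\<Sum>f\<in>S - {g}. (0::real)^(E f - E g) * D f) = 0"
    proof (intro sum.neutral ballI)
      fix f assume f: "f \<in> S - {g}"
      show "(0::real)^(E f - E g) * D f = 0"
      proof (cases "D f = 0")
        case False
        then have "E g < E f" using key f by blast
        then show ?thesis by simp
      qed simp
    qed
    ultimately show ?thesis by simp
  qed
  have lim: "(h \<longlongrightarrow> D g) (at_right 0)"
  proof -
    have "(h \<longlongrightarrow> (\<Sum>f\<in>S. (0::real)^(E f - E g) * D f)) (at_right 0)"
      unfolding h_def by (intro tendsto_intros)
    then show ?thesis using h0 by simp
  qed
  have ev1: "eventually (\<lambda>e. dist (h e) (D g) < \<bar>D g\<bar>) (at_right 0)"
    using lim Dg by (simp add: tendsto_iff)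
  have ev2: "eventually (\<lambda>e::real. 0 < e) (at_right 0)" by (rule eventually_at_right_less)
  show ?thesis
    using ev1 ev2
  proof eventually_elim
    case (elim e)
    have sh: "sgn (h e) = sgn (D g)" using elim(1) Dg
      by (auto simp: dist_real_def sgn_if abs_if split: if_splits)
    have "vec_or (map (xv Fl e) ks) = sgn (e^(E g) * h e)"
      by (simp add: vec_or_alt expand fac)
    also have "\<dots> = sgn (h e)" using elim(2) by (simp add: sgn_mult)
    finally show ?case using sh sb by simp
  qed
qed

theorem proposition4p4:
  fixes Fl :: "nat \<Rightarrow> (nat \<Rightarrow> (real, 'n::{finite,wellorder}) vec set) \<times> (nat \<Rightarrow> (real, 'n) vec set)"
  assumes "\<forall>k \<le> CARD('n) + 1. is_oriented_flag (Fl k)"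
  shows "\<exists>x :: nat \<Rightarrow> (real, 'n) vec. \<forall>i j. i < j \<and> j \<le> CARD('n) + 1 \<longrightarrow>
           Or_space (bracket (map Fl (omit2 i j (CARD('n) + 1))))
             = vec_or (map x (omit2 i j (CARD('n) + 1)))"
proof -
  let ?N = "CARD('n) + 1"
  define P where "P = {(i, j). i < j \<and> j \<le> ?N}"
  have finP: "finite P"
    by (rule finite_subset[of _ "{..?N} \<times> {..?N}"]) (auto simp: P_def)
  have "\<forall>p\<in>P. eventually (\<lambda>e. Or_space (bracket (map Fl (omit2 (fst p) (snd p) ?N)))
            = vec_or (map (xv Fl e) (omit2 (fst p) (snd p) ?N))) (at_right 0)"
  proof
    fix p assume "p \<in> P"
    then obtain i j where p: "p = (i, j)" "i < j" "j \<le> ?N" by (auto simp: P_def)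
    let ?ks = "omit2 i j ?N"
    note om = omit2_facts[OF p(2,3)]
    have len: "length ?ks = CARD('n)" using om(3) by simp
    have bd: "\<forall>k\<in>set ?ks. k \<le> CARD('n) + 1" using om(2) by auto
    have fl: "\<forall>k\<in>set ?ks. is_oriented_flag (Fl k)" using bd assms by auto
    note bi = bracket_inv[OF fl, unfolded len, OF order_refl]
    define b where "b = (SOME b. b \<in> bracket (map Fl ?ks))"
    have bin: "b \<in> bracket (map Fl ?ks)" unfolding b_def using bi some_in_eq by blast
    obtain \<mu> where mu: "binv Fl ?ks b \<mu>" using bi bin by blast
    have "Or_space (bracket (map Fl ?ks)) = vec_or b" unfolding Or_space_def b_def ..
    then show "eventually (\<lambda>e. Or_space (bracket (map Fl (omit2 (fst p) (snd p) ?N)))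
            = vec_or (map (xv Fl e) (omit2 (fst p) (snd p) ?N))) (at_right 0)"
      using pair_eventually[OF mu len om(1) bd] p(1) by (simp add: eq_commute)
  qed
  then have "eventually (\<lambda>e. \<forall>p\<in>P. Or_space (bracket (map Fl (omit2 (fst p) (snd p) ?N)))
            = vec_or (map (xv Fl e) (omit2 (fst p) (snd p) ?N))) (at_right 0)"
    by (rule eventually_ball_finite[OF finP])
  then obtain e where e: "\<forall>p\<in>P. Or_space (bracket (map Fl (omit2 (fst p) (snd p) ?N)))
            = vec_or (map (xv Fl e) (omit2 (fst p) (snd p) ?N))"
    using eventually_happens[of _ "at_right (0::real)"] trivial_limit_at_right_real by blast
  show ?thesis
  proof (intro exI[of _ "xv Fl e"] allI impI)
    fix i j assume "i < j \<and> j \<le> ?N"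
    then have "(i, j) \<in> P" by (simp add: P_def)
    then show "Or_space (bracket (map Fl (omit2 i j ?N))) = vec_or (map (xv Fl e) (omit2 i j ?N))"
      using e by fastforce
  qed
qed


end
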